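(* Let $r_1,\dots,r_n$ be pairwise distinct integers and $v_1,\dots,v_n\in\mathbb{N}\cup\{\infty\}$ such that the support $S_{(r_1,\dots,r_n)}^{(v_1,\dots,v_n)}$ is a subgroup of $\mathbb{Z}$, and let $d=\gcd(r_1,\dots,r_n)$. If $S$ is a basis (generating set as a $T_{\mathbb{Z}}$-ideal) for $T_{\mathbb{Z}}(E_{(r_1/d,\dots,r_n/d)}^{(v_1,\dots,v_n)})$, then the $T_{\mathbb{Z}}$-ideal $T_{\mathbb{Z}}(E_{(r_1,\dots,r_n)}^{(v_1,\dots,v_n)})$ is generated by $S'\cup N$, where $S'=\{\Psi_d(\Phi_d(f)) : f\in S\}$ and $N=\{x_i^m\in X : m\notin d\mathbb{Z}\}$.
   Context: $F$ is a field of characteristic zero; $E$ is the Grassmann algebra of an infinite-dimensional $F$-vector space with basis $e_1,e_2,\dots$. For pairwise distinct integers $r_1,\dots,r_n$ and $v_j\in\mathbb{N}\cup\{\infty\}$, $E_{(r_1,\dots,r_n)}^{(v_1,\dots,v_n)}=\bigoplus_r A_r$ is the $\mathbb{Z}$-grading obtained by splitting $\{e_i\}$ into $n$ disjoint sets of cardinalities $v_1,\dots,v_n$, giving elements of the $j$-th set degree $r_j$ and monomials the sum of degrees; its support is $S_{(r_1,\dots,r_n)}^{(v_1,\dots,v_n)}=\{r: A_r\ne0\}$. For a group $G$, $F\langle X|G\rangle$ is the free associative algebra on variables $x_i^g$ ($i\ge1$, $g\in G$) of degree $g$; $X$ denotes the set of variables; $T_G(A)$ is the ideal of graded identities of a $G$-graded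 algebra $A$; a $T_G$-ideal is an ideal invariant under all degree-preserving endomorphisms. $\Phi_d:F\langle X|\mathbb{Z}\rangle\to F\langle X|d\mathbb{Z}\rangle$ is the algebra isomorphism $x_i^n\mapsto x_i^{dn}$, and $\Psi_d:F\langle X|d\mathbb{Z}\rangle\to F\langle X|\mathbb{Z}\rangle$ is the homomorphism $x_i^{dn}\mapsto x_i^{dn}$. *)

theory Defs
  imports Main "HOL-Library.Extended_Nat"
begin

text \<open>A variable x_i^g is the pair (i, g) with i :: nat and degree g :: int.
  A noncommutative polynomial is a finitely supported coefficient function on words
  (lists of variables).\<close>

type_synonym gvar = "nat \<times> int"
type_synonym 'a fpoly = "gvar list \<Rightarrow> 'a"

definition fa :: "('a::field) fpoly set" where
  "fa = {f. finite {w. f w \<noteq> 0}}"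

definition pone :: "('a::field) fpoly" where
  "pone = (\<lambda>w. if w = [] then 1 else 0)"

definition pvar :: "gvar \<Rightarrow> ('a::field) fpoly" where
  "pvar x = (\<lambda>w. if w = [x] then 1 else 0)"

definition padd :: "('a::field) fpoly \<Rightarrow> 'a fpoly \<Rightarrow> 'a fpoly" where
  "padd f g = (\<lambda>w. f w + g w)"

definition pmult :: "('a::field) fpoly \<Rightarrow> 'a fpoly \<Rightarrow> 'a fpoly" where
  "pmult f g = (\<lambda>w. \<Sum>k\<le>length w. f (take k w) * g (drop k w))"

definition wdeg :: "gvar list \<Rightarrow> int" where
  "wdeg w = sum_list (map snd w)"

definition homog :: "int \<Rightarrow> ('a::field) fpoly \<Rightarrow> bool" where
  "homog g f \<longleftrightarrow> (\<forall>w. f w \<noteq> 0 \<longrightarrow> wdeg w = g)"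

definition subst :: "(gvar \<Rightarrow> ('a::field) fpoly) \<Rightarrow> 'a fpoly \<Rightarrow> 'a fpoly" where
  "subst \<sigma> f = (\<lambda>u. \<Sum>w\<in>{w. f w \<noteq> 0}. f w * foldr pmult (map \<sigma> w) pone u)"

definition graded_endo :: "(gvar \<Rightarrow> ('a::field) fpoly) \<Rightarrow> bool" where
  "graded_endo \<sigma> \<longleftrightarrow> (\<forall>i g. \<sigma> (i, g) \<in> fa \<and> homog g (\<sigma> (i, g)))"

definition is_ideal :: "('a::field) fpoly set \<Rightarrow> bool" where
  "is_ideal I \<longleftrightarrow> I \<subseteq> fa \<and> (\<lambda>w. 0) \<in> I \<and> (\<forall>f\<in>I. \<forall>g\<in>I. padd f g \<in> I)
     \<and> (\<forall>f\<in>I. \<forall>h\<in>fa. pmult h f \<in> I \<and> pmult f h \<in> I)"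

definition TZ_ideal :: "('a::field) fpoly set \<Rightarrow> bool" where
  "TZ_ideal I \<longleftrightarrow> is_ideal I \<and> (\<forall>\<sigma>. graded_endo \<sigma> \<longrightarrow> (\<forall>f\<in>I. subst \<sigma> f \<in> I))"

definition Tgen :: "('a::field) fpoly set \<Rightarrow> 'a fpoly set" where
  "Tgen S = \<Inter> {I. TZ_ideal I \<and> S \<subseteq> I}"

text \<open>F<X|dZ> as the subalgebra of F<X|Z> spanned by words in variables of degree in dZ;
  Phi_d : x_i^n \<mapsto> x_i^{dn} and Psi_d is the inclusion x_i^{dn} \<mapsto> x_i^{dn}.\<close>
definition FdZ :: "int \<Rightarrow> ('a::field) fpoly set" where
  "FdZ d = {f \<in> fa. \<forall>w. f w \<noteq> 0 \<longrightarrow> (\<forall>x\<in>set w. d dvd snd x)}"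

definition Phi :: "int \<Rightarrow> ('a::field) fpoly \<Rightarrow> 'a fpoly" where
  "Phi d f = (\<lambda>w. if (\<forall>x\<in>set w. d dvd snd x)
                  then f (map (\<lambda>(i, m). (i, m div d)) w) else 0)"

definition Psi :: "int \<Rightarrow> ('a::field) fpoly \<Rightarrow> 'a fpoly" where
  "Psi d f = f"

text \<open>Element of E: finitely supported coefficient function on finite subsets C of the
  index set (C ~ e_{c1} ... e_{ck}, c1 < ... < ck).\<close>
type_synonym 'a grass = "nat set \<Rightarrow> 'a"

definition gsign :: "nat set \<Rightarrow> nat set \<Rightarrow> 'a::field" where
  "gsign A B = (- 1) ^ card {(a, b). a \<in> A \<and> b \<in> B \<and> b < a}"

definition gmult :: "('a::field) grass \<Rightarrow> 'a grass \<Rightarrow> 'a grass" where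
  "gmult x y = (\<lambda>C. if finite C then (\<Sum>A\<in>Pow C. gsign A (C - A) * x A * y (C - A)) else 0)"

definition gone :: "('a::field) grass" where
  "gone = (\<lambda>C. if C = {} then 1 else 0)"

definition Ecarrier :: "('a::field) grass set" where
  "Ecarrier = {x. finite {C. x C \<noteq> 0} \<and> (\<forall>C. x C \<noteq> 0 \<longrightarrow> finite C)}"

definition Acomp :: "(nat \<Rightarrow> int) \<Rightarrow> int \<Rightarrow> ('a::field) grass set" where
  "Acomp deg g = {x \<in> Ecarrier. \<forall>C. x C \<noteq> 0 \<longrightarrow> (\<Sum>a\<in>C. deg a) = g}"

text \<open>Support {r. A_r \<noteq> 0}: the degrees of the basis monomials e_C.\<close>
definition gsupport :: "(nat \<Rightarrow> int) \<Rightarrow> int set" where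
  "gsupport deg = {(\<Sum>a\<in>C. deg a) | C. finite C}"

definition geval :: "(gvar \<Rightarrow> ('a::field) grass) \<Rightarrow> 'a fpoly \<Rightarrow> 'a grass" where
  "geval \<phi> f = (\<lambda>C. \<Sum>w\<in>{w. f w \<noteq> 0}. f w * foldr gmult (map \<phi> w) gone C)"

definition TZ_E :: "(nat \<Rightarrow> int) \<Rightarrow> ('a::field) fpoly set" where
  "TZ_E deg = {f \<in> fa. \<forall>\<phi>. (\<forall>i g. \<phi> (i, g) \<in> Acomp deg g) \<longrightarrow> geval \<phi> f = (\<lambda>C. 0)}"

definition int_subgroup :: "int set \<Rightarrow> bool" where
  "int_subgroup H \<longleftrightarrow> 0 \<in> H \<and> (\<forall>x\<in>H. \<forall>y\<in>H. x + y \<in> H) \<and> (\<forall>x\<in>H. - x \<in> H)"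

definition ecard :: "'b set \<Rightarrow> enat" where
  "ecard A = (if finite A then enat (card A) else \<infinity>)"

end

theory Submission
  imports Defs
begin

definition e1 :: "int \<Rightarrow> gvar \<Rightarrow> gvar" where "e1 d x = (fst x, d * snd x)"
definition dv :: "int \<Rightarrow> gvar \<Rightarrow> gvar" where "dv d x = (fst x, snd x div d)"
definition Dw :: "int \<Rightarrow> gvar list set" where "Dw d = {w. \<forall>x\<in>set w. d dvd snd x}"
definition Unp :: "int \<Rightarrow> ('a::field) fpoly \<Rightarrow> 'a fpoly" where "Unp d f = (\<lambda>w. f (map (e1 d) w))"
definition cmono :: "'a::field \<Rightarrow> gvar list \<Rightarrow> 'a fpoly" where "cmono c u = (\<lambda>w. if w = u then c else 0)"

lemma Phi_alt: "Phi d f w = (if w \<in> Dw d then f (map (dv d) w) else 0)"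
proof -
  have "(\<lambda>(i, m). (i, m div d)) = dv d" by (auto simp: dv_def fun_eq_iff)
  then show ?thesis by (simp add: Phi_def Dw_def)
qed

lemma inj_e1: "d \<noteq> 0 \<Longrightarrow> inj (e1 d)"
  by (auto simp: inj_def e1_def prod_eq_iff)

lemma inj_map_e1: "d \<noteq> 0 \<Longrightarrow> inj (map (e1 d))"
  using inj_e1 by auto

lemma dv_e1[simp]: "d \<noteq> 0 \<Longrightarrow> dv d (e1 d x) = x"
  by (simp add: dv_def e1_def)

lemma map_dv_e1[simp]: "d \<noteq> 0 \<Longrightarrow> map (dv d) (map (e1 d) w) = w"
  by (induct w) auto

lemma e1_in_Dw[simp]: "map (e1 d) w \<in> Dw d"
  by (auto simp: Dw_def e1_def)

lemma e1_dv: "w \<in> Dw d \<Longrightarrow> map (e1 d) (map (dv d) w) = w"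
  by (induct w) (auto simp: Dw_def e1_def dv_def prod_eq_iff)

lemma Phi_Unp: "Phi d (Unp d f) w = (if w \<in> Dw d then f w else 0)"
  by (simp add: Phi_alt Unp_def e1_dv del: map_map)

lemma Unp_Phi: "d \<noteq> 0 \<Longrightarrow> Unp d (Phi d g) = g"
  by (simp add: Phi_alt Unp_def fun_eq_iff del: map_map)

lemma wdeg_e1: "wdeg (map (e1 d) w) = d * wdeg w"
  by (induct w) (auto simp: wdeg_def e1_def algebra_simps)

lemma wdeg_dv: "w \<in> Dw d \<Longrightarrow> wdeg w = d * wdeg (map (dv d) w)"
  by (metis e1_dv wdeg_e1)

lemma sum_reindex_D:
  fixes f :: "gvar list \<Rightarrow> 'a::comm_ring_1"
  assumes d: "d \<noteq> 0" and fin: "finite {w. f w \<noteq> 0}"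
    and z: "\<And>w. f w \<noteq> 0 \<Longrightarrow> w \<notin> Dw d \<Longrightarrow> P w = 0"
  shows "(\<Sum>w\<in>{w. f w \<noteq> 0}. f w * P w)
       = (\<Sum>w\<in>{w. f (map (e1 d) w) \<noteq> 0}. f (map (e1 d) w) * P (map (e1 d) w))"
proof -
  have img: "map (e1 d) ` {w. f (map (e1 d) w) \<noteq> 0} = {w. f w \<noteq> 0} \<inter> Dw d"
  proof
    show "{w. f w \<noteq> 0} \<inter> Dw d \<subseteq> map (e1 d) ` {w. f (map (e1 d) w) \<noteq> 0}"
    proof
      fix w assume "w \<in> {w. f w \<noteq> 0} \<inter> Dw d"
      then show "w \<in> map (e1 d) ` {w. f (map (e1 d) w) \<noteq> 0}"
        using e1_dv[of w d] by (metis (mono_tags, lifting) IntD1 IntD2 image_eqI mem_Collect_eq)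
    qed
  qed auto
  have "(\<Sum>w\<in>{w. f w \<noteq> 0}. f w * P w) = (\<Sum>w\<in>{w. f w \<noteq> 0} \<inter> Dw d. f w * P w)"
    by (rule sum.mono_neutral_right) (use fin z in \<open>fastforce+\<close>)
  also have "\<dots> = (\<Sum>w\<in>map (e1 d) ` {w. f (map (e1 d) w) \<noteq> 0}. f w * P w)"
    by (simp add: img)
  also have "\<dots> = (\<Sum>w\<in>{w. f (map (e1 d) w) \<noteq> 0}. f (map (e1 d) w) * P (map (e1 d) w))"
    by (subst sum.reindex) (use inj_map_e1[OF d] in \<open>auto intro: inj_on_subset\<close>)
  finally show ?thesis .
qed

lemma pmult_zero_left[simp]: "pmult (\<lambda>w. 0) g = (\<lambda>w. (0::'a::field))"
  by (simp add: pmult_def)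
lemma pmult_zero_right[simp]: "pmult f (\<lambda>w. 0) = (\<lambda>w. (0::'a::field))"
  by (simp add: pmult_def)

lemma foldr_pmult_zero:
  assumes "x \<in> set w" "\<sigma> x = (\<lambda>w. 0)"
  shows "foldr pmult (map \<sigma> w) pone = (\<lambda>w. (0::'a::field))"
  using assms by (induct w) auto

lemma gmult_zero_left[simp]: "gmult (\<lambda>C. 0) g = (\<lambda>C. (0::'a::field))"
  by (simp add: gmult_def fun_eq_iff)
lemma gmult_zero_right[simp]: "gmult f (\<lambda>C. 0) = (\<lambda>C. (0::'a::field))"
  by (simp add: gmult_def fun_eq_iff)

lemma foldr_gmult_zero:
  assumes "x \<in> set w" "\<phi> x = (\<lambda>C. 0)"
  shows "foldr gmult (map \<phi> w) gone = (\<lambda>C. (0::'a::field))"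
  using assms by (induct w) auto

lemma Unp_pmult: "Unp d (pmult h f) = pmult (Unp d h) (Unp d f)"
  by (simp add: pmult_def Unp_def fun_eq_iff take_map drop_map)

lemma Unp_pone: "d \<noteq> 0 \<Longrightarrow> Unp d pone = pone"
  by (simp add: Unp_def pone_def fun_eq_iff)

lemma Unp_foldr: "d \<noteq> 0 \<Longrightarrow> Unp d (foldr pmult (map \<sigma> w) pone) = foldr pmult (map (Unp d \<circ> \<sigma>) w) pone"
  by (induct w) (auto simp: Unp_pmult Unp_pone)

lemma Dw_take: "w \<in> Dw d \<Longrightarrow> take k w \<in> Dw d"
  by (auto simp: Dw_def dest: in_set_takeD)
lemma Dw_drop: "w \<in> Dw d \<Longrightarrow> drop k w \<in> Dw d"
  by (auto simp: Dw_def dest: in_set_dropD)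
lemma Dw_append: "u @ v \<in> Dw d \<longleftrightarrow> u \<in> Dw d \<and> v \<in> Dw d"
  by (auto simp: Dw_def)

lemma Phi_pmult: "Phi d (pmult h g) = pmult (Phi d h) (Phi d g)"
proof
  fix w
  show "Phi d (pmult h g) w = pmult (Phi d h) (Phi d g) w"
  proof (cases "w \<in> Dw d")
    case True
    then show ?thesis
      by (simp add: Phi_alt pmult_def Dw_take Dw_drop take_map drop_map)
  next
    case False
    have "\<And>k. Phi d h (take k w) * Phi d g (drop k w) = 0"
    proof -
      fix k
      have "take k w \<notin> Dw d \<or> drop k w \<notin> Dw d"
        using False Dw_append[of "take k w" "drop k w" d] by auto
      then show "Phi d h (take k w) * Phi d g (drop k w) = 0" by (auto simp: Phi_alt)
    qed
    then have "pmult (Phi d h) (Phi d g) w = 0" unfolding pmult_def by (intro sum.neutral ballI) simp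
    then show ?thesis using False by (simp add: Phi_alt)
  qed
qed

lemma Phi_pone: "Phi d pone = pone"
  by (auto simp: Phi_alt pone_def fun_eq_iff Dw_def)

lemma Phi_foldr: "Phi d (foldr pmult (map \<sigma> w) pone) = foldr pmult (map (Phi d \<circ> \<sigma>) w) pone"
  by (induct w) (auto simp: Phi_pmult Phi_pone)

lemma Phi_padd: "Phi d (padd f g) = padd (Phi d f) (Phi d g)"
  by (auto simp: Phi_alt padd_def fun_eq_iff)
lemma Unp_padd: "Unp d (padd f g) = padd (Unp d f) (Unp d g)"
  by (auto simp: Unp_def padd_def fun_eq_iff)
lemma Phi_zero: "Phi d (\<lambda>w. 0) = (\<lambda>w. 0)"
  by (auto simp: Phi_alt fun_eq_iff)
lemma Unp_zero: "Unp d (\<lambda>w. 0) = (\<lambda>w. 0)"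
  by (auto simp: Unp_def fun_eq_iff)

lemma fa_Unp: "d \<noteq> 0 \<Longrightarrow> f \<in> fa \<Longrightarrow> Unp d f \<in> fa"
proof -
  assume d: "d \<noteq> 0" and f: "f \<in> fa"
  have "{w. Unp d f w \<noteq> 0} = map (e1 d) -` {w. f w \<noteq> 0}" by (auto simp: Unp_def)
  moreover have "finite (map (e1 d) -` {w. f w \<noteq> 0})"
    by (rule finite_vimageI) (use f inj_map_e1[OF d] in \<open>auto simp: fa_def\<close>)
  ultimately show ?thesis by (simp add: fa_def)
qed

lemma fa_Phi: "f \<in> fa \<Longrightarrow> Phi d f \<in> fa"
proof -
  assume f: "f \<in> fa"
  have "{w. Phi d f w \<noteq> 0} \<subseteq> map (e1 d) ` {w. f w \<noteq> 0}"
  proof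
    fix w assume "w \<in> {w. Phi d f w \<noteq> 0}"
    then have "w \<in> Dw d" "f (map (dv d) w) \<noteq> 0" by (auto simp: Phi_alt split: if_splits)
    show "w \<in> map (e1 d) ` {w. f w \<noteq> 0}" 
    proof (rule image_eqI)
      show "w = map (e1 d) (map (dv d) w)" using e1_dv[OF \<open>w \<in> Dw d\<close>] by simp
    qed (use \<open>f (map (dv d) w) \<noteq> 0\<close> in simp)
  qed
  then show ?thesis using f by (auto simp: fa_def intro: finite_subset)
qed

lemma fa_pmult: "f \<in> fa \<Longrightarrow> g \<in> fa \<Longrightarrow> pmult f g \<in> fa"
proof -
  assume f: "f \<in> fa" and g: "g \<in> fa"
  have "{w. pmult f g w \<noteq> 0} \<subseteq> (\<lambda>(u, v). u @ v) ` ({w. f w \<noteq> 0} \<times> {w. g w \<noteq> 0})"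
  proof
    fix w assume "w \<in> {w. pmult f g w \<noteq> 0}"
    then have "(\<Sum>k\<le>length w. f (take k w) * g (drop k w)) \<noteq> 0" by (simp add: pmult_def)
    then obtain k where "f (take k w) * g (drop k w) \<noteq> 0"
      by (rule sum.not_neutral_contains_not_neutral)
    then have "(take k w, drop k w) \<in> {w. f w \<noteq> 0} \<times> {w. g w \<noteq> 0}" by auto
    then show "w \<in> (\<lambda>(u, v). u @ v) ` ({w. f w \<noteq> 0} \<times> {w. g w \<noteq> 0})"
      by (metis (no_types, lifting) append_take_drop_id case_prod_conv image_eqI)
  qed
  then show ?thesis using f g by (auto simp: fa_def intro: finite_subset)
qed

lemma fa_pone: "pone \<in> fa"
  by (simp add: fa_def pone_def)

lemma fa_zero: "(\<lambda>w. 0) \<in> fa"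
  by (simp add: fa_def)

lemma fa_padd: "f \<in> fa \<Longrightarrow> g \<in> fa \<Longrightarrow> padd f g \<in> fa"
proof -
  assume "f \<in> fa" "g \<in> fa"
  moreover have "{w. padd f g w \<noteq> 0} \<subseteq> {w. f w \<noteq> 0} \<union> {w. g w \<noteq> 0}" by (auto simp: padd_def)
  ultimately show ?thesis by (auto simp: fa_def intro: finite_subset)
qed

lemma fa_foldr: "(\<And>x. \<sigma> x \<in> fa) \<Longrightarrow> foldr pmult (map \<sigma> w) pone \<in> fa"
  by (induct w) (auto simp: fa_pone fa_pmult)

lemma fa_subst:
  assumes f: "f \<in> fa" and s: "\<And>x. \<sigma> x \<in> fa"
  shows "subst \<sigma> f \<in> fa"
proof -
  have "{u. subst \<sigma> f u \<noteq> 0} \<subseteq> (\<Union>w\<in>{w. f w \<noteq> 0}. {u. foldr pmult (map \<sigma> w) pone u \<noteq> 0})"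
  proof
    fix u assume "u \<in> {u. subst \<sigma> f u \<noteq> 0}"
    then have "(\<Sum>w\<in>{w. f w \<noteq> 0}. f w * foldr pmult (map \<sigma> w) pone u) \<noteq> 0" by (simp add: subst_def)
    then obtain w where "w \<in> {w. f w \<noteq> 0}" "f w * foldr pmult (map \<sigma> w) pone u \<noteq> 0"
      by (rule sum.not_neutral_contains_not_neutral)
    then show "u \<in> (\<Union>w\<in>{w. f w \<noteq> 0}. {u. foldr pmult (map \<sigma> w) pone u \<noteq> 0})" by auto
  qed
  moreover have "finite (\<Union>w\<in>{w. f w \<noteq> 0}. {u. foldr pmult (map \<sigma> w) pone u \<noteq> 0})"
    using f fa_foldr[of \<sigma>, OF s] by (auto simp: fa_def)
  ultimately show ?thesis by (auto simp: fa_def intro: finite_subset)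
qed

lemma Tgen_least: "TZ_ideal I \<Longrightarrow> X \<subseteq> I \<Longrightarrow> Tgen X \<subseteq> I"
  by (auto simp: Tgen_def)

lemma Tgen_sup: "X \<subseteq> Tgen X"
  by (auto simp: Tgen_def)

lemma Tgen_TZ:
  fixes X :: "('a::field) fpoly set"
  assumes "TZ_ideal I" "X \<subseteq> I"
  shows "TZ_ideal (Tgen X)"
proof -
  let ?F = "{I. TZ_ideal I \<and> X \<subseteq> I}"
  have ne: "?F \<noteq> {}" using assms by auto
  have sub: "Tgen X \<subseteq> fa" using assms by (auto simp: Tgen_def TZ_ideal_def is_ideal_def)
  show ?thesis
    unfolding TZ_ideal_def is_ideal_def
  proof (intro conjI ballI allI impI)
    show "Tgen X \<subseteq> fa" by (rule sub)
    show "(\<lambda>w. 0) \<in> Tgen X" by (auto simp: Tgen_def TZ_ideal_def is_ideal_def)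
    fix f assume f: "f \<in> Tgen X"
    { fix g assume "g \<in> Tgen X"
      then show "padd f g \<in> Tgen X" using f by (auto simp: Tgen_def TZ_ideal_def is_ideal_def) }
    { fix h :: "'a fpoly" assume "h \<in> fa"
      then show "pmult h f \<in> Tgen X" "pmult f h \<in> Tgen X"
        using f by (auto simp: Tgen_def TZ_ideal_def is_ideal_def) }
    { fix \<sigma> :: "gvar \<Rightarrow> 'a fpoly" assume "graded_endo \<sigma>"
      then show "subst \<sigma> f \<in> Tgen X" using f by (auto simp: Tgen_def TZ_ideal_def) }
  qed
qed

lemma Unp_sigma_zero:
  assumes g: "graded_endo \<sigma>" and x: "\<not> d dvd snd x"
  shows "Unp d (\<sigma> x) = (\<lambda>w. (0::'a::field))"
proof
  fix w
  obtain i m where xe: "x = (i, m)" by (cases x)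
  have h: "homog m (\<sigma> (i, m))" using g by (simp add: graded_endo_def)
  show "Unp d (\<sigma> x) w = 0"
  proof (rule ccontr)
    assume "Unp d (\<sigma> x) w \<noteq> 0"
    then have "\<sigma> (i, m) (map (e1 d) w) \<noteq> 0" by (simp add: Unp_def xe)
    then have "wdeg (map (e1 d) w) = m" using h by (simp add: homog_def)
    then have "m = d * wdeg w" by (simp add: wdeg_e1)
    then show False using x xe by simp
  qed
qed

lemma graded_Unp:
  assumes d: "d \<noteq> 0" and g: "graded_endo \<sigma>"
  shows "graded_endo (Unp d \<circ> \<sigma> \<circ> e1 d)"
  unfolding graded_endo_def
proof (intro allI conjI)
  fix i m
  have s: "\<sigma> (i, d * m) \<in> fa" "homog (d * m) (\<sigma> (i, d * m))" using g by (auto simp: graded_endo_def)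
  show "(Unp d \<circ> \<sigma> \<circ> e1 d) (i, m) \<in> fa" using fa_Unp[OF d s(1)] by (simp add: e1_def)
  show "homog m ((Unp d \<circ> \<sigma> \<circ> e1 d) (i, m))"
    unfolding homog_def
  proof (intro allI impI)
    fix w assume "(Unp d \<circ> \<sigma> \<circ> e1 d) (i, m) w \<noteq> 0"
    then have "\<sigma> (i, d * m) (map (e1 d) w) \<noteq> 0" by (simp add: Unp_def e1_def)
    then have "wdeg (map (e1 d) w) = d * m" using s(2) by (simp add: homog_def)
    then show "wdeg w = m" using d by (simp add: wdeg_e1)
  qed
qed

lemma Unp_apply: "Unp d X u = X (map (e1 d) u)"
  by (simp add: Unp_def)

lemma Unp_subst:
  assumes d: "d \<noteq> 0" and f: "f \<in> fa" and g: "graded_endo \<sigma>"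
  shows "Unp d (subst \<sigma> f) = subst (Unp d \<circ> \<sigma> \<circ> e1 d) (Unp d f)"
proof
  fix u
  have "Unp d (subst \<sigma> f) u = (\<Sum>w\<in>{w. f w \<noteq> 0}. f w * foldr pmult (map \<sigma> w) pone (map (e1 d) u))"
    by (simp add: Unp_def subst_def)
  also have "\<dots> = (\<Sum>w\<in>{w. f w \<noteq> 0}. f w * foldr pmult (map (Unp d \<circ> \<sigma>) w) pone u)"
    by (simp add: Unp_foldr[OF d, symmetric] Unp_apply)
  also have "\<dots> = (\<Sum>w\<in>{w. f (map (e1 d) w) \<noteq> 0}. f (map (e1 d) w) * foldr pmult (map (Unp d \<circ> \<sigma>) (map (e1 d) w)) pone u)"
  proof (rule sum_reindex_D[OF d])
    show "finite {w. f w \<noteq> 0}" using f by (simp add: fa_def)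
    fix w assume "w \<notin> Dw d"
    then obtain x where x: "x \<in> set w" "\<not> d dvd snd x" by (auto simp: Dw_def)
    have h: "(Unp d \<circ> \<sigma>) x = (\<lambda>w. 0)" using Unp_sigma_zero[OF g x(2)] by simp
    show "foldr pmult (map (Unp d \<circ> \<sigma>) w) pone u = 0"
      using foldr_pmult_zero[of x w "Unp d \<circ> \<sigma>", OF x(1) h] by simp
  qed
  also have "\<dots> = subst (Unp d \<circ> \<sigma> \<circ> e1 d) (Unp d f) u"
    by (simp add: subst_def Unp_def)
  finally show "Unp d (subst \<sigma> f) u = subst (Unp d \<circ> \<sigma> \<circ> e1 d) (Unp d f) u" .
qed

definition sig' :: "int \<Rightarrow> (gvar \<Rightarrow> ('a::field) fpoly) \<Rightarrow> gvar \<Rightarrow> 'a fpoly" where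
  "sig' d \<sigma> x = (if d dvd snd x then Phi d (\<sigma> (dv d x)) else (\<lambda>w. 0))"

lemma graded_sig':
  assumes d: "d \<noteq> 0" and g: "graded_endo \<sigma>"
  shows "graded_endo (sig' d \<sigma>)"
  unfolding graded_endo_def
proof (intro allI conjI)
  fix i m
  show "sig' d \<sigma> (i, m) \<in> fa"
    using g by (auto simp: sig'_def fa_zero graded_endo_def dv_def intro!: fa_Phi)
  show "homog m (sig' d \<sigma> (i, m))"
  proof (cases "d dvd m")
    case True
    have s: "homog (m div d) (\<sigma> (i, m div d))" using g by (auto simp: graded_endo_def)
    show ?thesis
      unfolding homog_def
    proof (intro allI impI)
      fix w assume "sig' d \<sigma> (i, m) w \<noteq> 0"
      then have w: "w \<in> Dw d" "\<sigma> (i, m div d) (map (dv d) w) \<noteq> 0"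
        using True by (auto simp: sig'_def Phi_alt dv_def split: if_splits)
      then have "wdeg (map (dv d) w) = m div d" using s by (simp add: homog_def)
      then show "wdeg w = m" using wdeg_dv[OF w(1)] True by simp
    qed
  next
    case False
    then show ?thesis by (simp add: sig'_def homog_def)
  qed
qed

lemma Phi_subst:
  assumes d: "d \<noteq> 0" and g: "g \<in> fa"
  shows "Phi d (subst \<sigma> g) = subst (sig' d \<sigma>) (Phi d g)"
proof
  fix u
  have "subst (sig' d \<sigma>) (Phi d g) u
      = (\<Sum>w\<in>{w. Phi d g w \<noteq> 0}. Phi d g w * foldr pmult (map (sig' d \<sigma>) w) pone u)"
    by (simp add: subst_def)
  also have "\<dots> = (\<Sum>w\<in>{w. Phi d g (map (e1 d) w) \<noteq> 0}. Phi d g (map (e1 d) w) * foldr pmult (map (sig' d \<sigma>) (map (e1 d) w)) pone u)"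
  proof (rule sum_reindex_D[OF d])
    show "finite {w. Phi d g w \<noteq> 0}" using fa_Phi[OF g] by (simp add: fa_def)
    fix w assume "Phi d g w \<noteq> 0" "w \<notin> Dw d"
    then show "foldr pmult (map (sig' d \<sigma>) w) pone u = 0" by (simp add: Phi_alt)
  qed
  also have "\<dots> = (\<Sum>w\<in>{w. g w \<noteq> 0}. g w * foldr pmult (map (Phi d \<circ> \<sigma>) w) pone u)"
  proof -
    have e: "Phi d g (map (e1 d) w) = g w" for w
      using Unp_Phi[OF d, of g] by (simp add: Unp_def fun_eq_iff)
    have m: "map (sig' d \<sigma>) (map (e1 d) w) = map (Phi d \<circ> \<sigma>) w" for w
      using d by (simp add: sig'_def e1_def dv_def)
    show ?thesis by (simp only: e m)
  qed
  also have "\<dots> = (\<Sum>w\<in>{w. g w \<noteq> 0}. g w * Phi d (foldr pmult (map \<sigma> w) pone) u)"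
    by (simp only: Phi_foldr)
  also have "\<dots> = Phi d (subst \<sigma> g) u"
    by (cases "u \<in> Dw d") (simp_all add: Phi_alt subst_def)
  finally show "Phi d (subst \<sigma> g) u = subst (sig' d \<sigma>) (Phi d g) u" ..
qed

lemma geval_reindex:
  assumes d: "d \<noteq> 0" and f: "f \<in> fa" and z: "\<And>x. \<not> d dvd snd x \<Longrightarrow> \<phi> x = (\<lambda>C. 0)"
  shows "geval \<phi> f = geval (\<phi> \<circ> e1 d) (Unp d f)"
proof
  fix C
  have "geval \<phi> f C = (\<Sum>w\<in>{w. f w \<noteq> 0}. f w * foldr gmult (map \<phi> w) gone C)"
    by (simp add: geval_def)
  also have "\<dots> = (\<Sum>w\<in>{w. f (map (e1 d) w) \<noteq> 0}. f (map (e1 d) w) * foldr gmult (map \<phi> (map (e1 d) w)) gone C)"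
  proof (rule sum_reindex_D[OF d])
    show "finite {w. f w \<noteq> 0}" using f by (simp add: fa_def)
    fix w assume "w \<notin> Dw d"
    then obtain x where x: "x \<in> set w" "\<not> d dvd snd x" by (auto simp: Dw_def)
    show "foldr gmult (map \<phi> w) gone C = 0"
      using foldr_gmult_zero[of x w \<phi>, OF x(1) z[OF x(2)]] by simp
  qed
  also have "\<dots> = geval (\<phi> \<circ> e1 d) (Unp d f) C"
    by (simp add: geval_def Unp_def)
  finally show "geval \<phi> f C = geval (\<phi> \<circ> e1 d) (Unp d f) C" .
qed

lemma TZ_fa: "TZ_ideal I \<Longrightarrow> f \<in> I \<Longrightarrow> f \<in> fa"
  by (auto simp: TZ_ideal_def is_ideal_def)
lemma TZ_zero: "TZ_ideal I \<Longrightarrow> (\<lambda>w. 0) \<in> I"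
  by (auto simp: TZ_ideal_def is_ideal_def)
lemma TZ_padd: "TZ_ideal I \<Longrightarrow> f \<in> I \<Longrightarrow> g \<in> I \<Longrightarrow> padd f g \<in> I"
  by (auto simp: TZ_ideal_def is_ideal_def)
lemma TZ_pmult_l: "TZ_ideal I \<Longrightarrow> h \<in> fa \<Longrightarrow> f \<in> I \<Longrightarrow> pmult h f \<in> I"
  by (auto simp: TZ_ideal_def is_ideal_def)
lemma TZ_pmult_r: "TZ_ideal I \<Longrightarrow> h \<in> fa \<Longrightarrow> f \<in> I \<Longrightarrow> pmult f h \<in> I"
  by (auto simp: TZ_ideal_def is_ideal_def)
lemma TZ_subst: "TZ_ideal I \<Longrightarrow> graded_endo \<sigma> \<Longrightarrow> f \<in> I \<Longrightarrow> subst \<sigma> f \<in> I"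
  by (auto simp: TZ_ideal_def)

lemma fa_cmono: "cmono c u \<in> fa"
proof -
  have "{w. cmono c u w \<noteq> 0} \<subseteq> {u}" by (auto simp: cmono_def)
  then show ?thesis by (auto simp: fa_def intro: finite_subset)
qed

lemma pmult_cmono: "pmult (cmono a u) (cmono b v) = cmono (a * b) (u @ v)"
proof
  fix w
  have eq: "(if take k w = u then a else 0) * (if drop k w = v then b else 0)
      = (if k = length u then (if w = u @ v then a * b else 0) else 0)" if "k \<le> length w" for k
  proof -
    have "(take k w = u \<and> drop k w = v) \<longleftrightarrow> (w = u @ v \<and> k = length u)"
    proof
      assume L: "take k w = u \<and> drop k w = v"
      have "w = u @ v" using L append_take_drop_id[of k w] by simp
      moreover have "k = length u" using L that by auto
      ultimately show "w = u @ v \<and> k = length u" by simp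
    qed auto
    then show ?thesis by (cases "take k w = u"; cases "drop k w = v") simp_all
  qed
  have "pmult (cmono a u) (cmono b v) w
      = (\<Sum>k\<le>length w. (if take k w = u then a else 0) * (if drop k w = v then b else 0))"
    by (simp add: pmult_def cmono_def)
  also have "\<dots> = (\<Sum>k\<le>length w. (if k = length u then (if w = u @ v then a * b else 0) else 0))"
    by (rule sum.cong) (auto simp: eq)
  also have "\<dots> = cmono (a * b) (u @ v) w"
    by (auto simp: cmono_def)
  finally show "pmult (cmono a u) (cmono b v) w = cmono (a * b) (u @ v) w" .
qed

lemma pvar_cmono: "pvar x = cmono 1 [x]"
  by (simp add: pvar_def cmono_def)

lemma fa_not_univ: "(\<lambda>w. 1::'a::field) \<notin> fa"
  by (simp add: fa_def infinite_UNIV_listI)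

theorem theorem5p5:
  fixes n :: nat and r :: "nat \<Rightarrow> int" and v :: "nat \<Rightarrow> enat"
    and part :: "nat \<Rightarrow> nat" and d :: int
    and S :: "('a::field_char_0) fpoly set"
  assumes distinct: "inj_on r {..<n}"
    and part_range: "\<forall>i. part i < n"
    and part_card: "\<forall>j<n. ecard {i. part i = j} = v j"
    and subgrp: "int_subgroup (gsupport (\<lambda>i. r (part i)))"
    and d_def: "d = Gcd (r ` {..<n})"
    and d_nz: "d \<noteq> 0"
    and basis: "Tgen S = TZ_E (\<lambda>i. r (part i) div d)"
  shows "Tgen ((\<lambda>f. Psi d (Phi d f)) ` S \<union> {pvar (i, m) | i m. \<not> d dvd m})
           = TZ_E (\<lambda>i. r (part i))"
proof -
  define deg where "deg = (\<lambda>i. r (part i))"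
  define deg' where "deg' = (\<lambda>i. r (part i) div d)"
  define T :: "'a fpoly set" where "T = TZ_E deg'"
  define S' where "S' = (\<lambda>f. Psi d (Phi d f)) ` S"
  define N :: "'a fpoly set" where "N = {pvar (i, m) | i m. \<not> d dvd m}"
  have dvdr: "d dvd r (part i)" for i
    unfolding d_def using part_range by (intro Gcd_dvd) auto
  have degeq: "deg i = d * deg' i" for i
    using dvdr[of i] by (simp add: deg_def deg'_def)
  have sumeq: "(\<Sum>a\<in>C. deg a) = d * (\<Sum>a\<in>C. deg' a)" for C
    by (simp add: degeq sum_distrib_left)
  have Acomp_eq: "Acomp deg (d * m) = Acomp deg' m" for m :: int
    using d_nz by (simp add: Acomp_def sumeq)
  have Acomp_zero: "x = (\<lambda>C. 0)" if "x \<in> Acomp deg m" "\<not> d dvd m" for x :: "'a grass" and m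
  proof
    fix C show "x C = 0"
    proof (rule ccontr)
      assume "x C \<noteq> 0"
      then have "(\<Sum>a\<in>C. deg a) = m" using that(1) by (simp add: Acomp_def)
      then show False using that(2) sumeq[of C] by (metis dvd_triv_left)
    qed
  qed
  have zero_Acomp: "(\<lambda>C. 0) \<in> Acomp deg m" for m
    by (simp add: Acomp_def Ecarrier_def)
  have basisT: "Tgen S = T" using basis by (simp add: T_def deg'_def)
  have T_fa: "T \<subseteq> fa" by (auto simp: T_def TZ_E_def)
  have T_TZ: "TZ_ideal T"
  proof (cases "\<exists>I. TZ_ideal I \<and> S \<subseteq> I")
    case True
    then show ?thesis using Tgen_TZ basisT by metis
  next
    case False
    then have "Tgen S = UNIV" by (auto simp: Tgen_def)
    then show ?thesis using T_fa fa_not_univ basisT by auto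
  qed
  have S_T: "S \<subseteq> T" using Tgen_sup basisT by metis
  define J where "J = {f \<in> fa. Unp d f \<in> T}"
  have J_TZ: "TZ_ideal J"
    unfolding TZ_ideal_def is_ideal_def
  proof (intro conjI ballI allI impI)
    show "J \<subseteq> fa" by (auto simp: J_def)
    show "(\<lambda>w. 0) \<in> J" using fa_zero TZ_zero[OF T_TZ] by (simp add: J_def Unp_zero)
    fix f assume f: "f \<in> J"
    { fix g assume "g \<in> J"
      then show "padd f g \<in> J" using f TZ_padd[OF T_TZ] fa_padd by (auto simp: J_def Unp_padd) }
    { fix h :: "'a fpoly" assume h: "h \<in> fa"
      show "pmult h f \<in> J" using f h by (auto simp: J_def Unp_pmult intro!: TZ_pmult_l[OF T_TZ] fa_pmult fa_Unp[OF d_nz])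
      show "pmult f h \<in> J" using f h by (auto simp: J_def Unp_pmult intro!: TZ_pmult_r[OF T_TZ] fa_pmult fa_Unp[OF d_nz]) }
    { fix \<sigma> :: "gvar \<Rightarrow> 'a fpoly" assume g: "graded_endo \<sigma>"
      have sfa: "\<sigma> x \<in> fa" for x using g by (cases x) (auto simp: graded_endo_def)
      have ff: "f \<in> fa" and fT: "Unp d f \<in> T" using f by (auto simp: J_def)
      have "subst \<sigma> f \<in> fa" using ff sfa by (rule fa_subst)
      moreover have "Unp d (subst \<sigma> f) \<in> T"
        unfolding Unp_subst[OF d_nz ff g] by (rule TZ_subst[OF T_TZ graded_Unp[OF d_nz g] fT])
      ultimately show "subst \<sigma> f \<in> J" by (simp add: J_def) }
  qed
  have S'J: "S' \<subseteq> J"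
  proof
    fix p assume "p \<in> S'"
    then obtain f where f: "f \<in> S" "p = Phi d f" by (auto simp: S'_def Psi_def)
    then have "f \<in> fa" using S_T T_fa by auto
    then show "p \<in> J" using f S_T by (auto simp: J_def Unp_Phi[OF d_nz] intro: fa_Phi)
  qed
  have NJ: "N \<subseteq> J"
  proof
    fix p assume "p \<in> N"
    then obtain i m where p: "p = pvar (i, m)" "\<not> d dvd m" by (auto simp: N_def)
    have "Unp d p = (\<lambda>w. 0)"
    proof
      fix w show "Unp d p w = 0"
      proof (rule ccontr)
        assume "Unp d p w \<noteq> 0"
        then have "map (e1 d) w = [(i, m)]" by (simp add: Unp_def p pvar_def split: if_splits)
        then obtain y where "w = [y]" "e1 d y = (i, m)" by (cases w) auto
        then show False using p(2) by (auto simp: e1_def)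
      qed
    qed
    then show "p \<in> J" using p fa_cmono[of 1 "[(i, m)]"] TZ_zero[OF T_TZ]
      by (simp add: J_def pvar_cmono)
  qed
  define K where "K = Tgen (S' \<union> N)"
  have K_TZ: "TZ_ideal K" unfolding K_def proof (rule Tgen_TZ[OF J_TZ]) show "S' \<union> N \<subseteq> J" using S'J NJ by (rule Un_least) qed
  have KJ: "K \<subseteq> J" unfolding K_def proof (rule Tgen_least[OF J_TZ]) show "S' \<union> N \<subseteq> J" using S'J NJ by (rule Un_least) qed
  define I' where "I' = {g \<in> fa. Phi d g \<in> K}"
  have I'_TZ: "TZ_ideal I'"
    unfolding TZ_ideal_def is_ideal_def
  proof (intro conjI ballI allI impI)
    show "I' \<subseteq> fa" by (auto simp: I'_def)
    show "(\<lambda>w. 0) \<in> I'" using fa_zero TZ_zero[OF K_TZ] by (simp add: I'_def Phi_zero)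
    fix f assume f: "f \<in> I'"
    { fix g assume "g \<in> I'"
      then show "padd f g \<in> I'" using f TZ_padd[OF K_TZ] fa_padd by (auto simp: I'_def Phi_padd) }
    { fix h :: "'a fpoly" assume h: "h \<in> fa"
      show "pmult h f \<in> I'" using f h by (auto simp: I'_def Phi_pmult intro!: TZ_pmult_l[OF K_TZ] fa_pmult fa_Phi)
      show "pmult f h \<in> I'" using f h by (auto simp: I'_def Phi_pmult intro!: TZ_pmult_r[OF K_TZ] fa_pmult fa_Phi) }
    { fix \<sigma> :: "gvar \<Rightarrow> 'a fpoly" assume g: "graded_endo \<sigma>"
      have sfa: "\<sigma> x \<in> fa" for x using g by (cases x) (auto simp: graded_endo_def)
      have ff: "f \<in> fa" and fK: "Phi d f \<in> K" using f by (auto simp: I'_def)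
      have "subst \<sigma> f \<in> fa" using ff sfa by (rule fa_subst)
      moreover have "Phi d (subst \<sigma> f) \<in> K"
        unfolding Phi_subst[OF d_nz ff] by (rule TZ_subst[OF K_TZ graded_sig'[OF d_nz g] fK])
      ultimately show "subst \<sigma> f \<in> I'" by (simp add: I'_def) }
  qed
  have S_I': "S \<subseteq> I'"
  proof
    fix f assume f: "f \<in> S"
    then have "Phi d f \<in> S'" by (auto simp: S'_def Psi_def)
    then have "Phi d f \<in> K" using Tgen_sup[of "S' \<union> N"] by (auto simp: K_def)
    then show "f \<in> I'" using f S_T T_fa by (auto simp: I'_def)
  qed
  have T_I': "T \<subseteq> I'" using Tgen_least[OF I'_TZ S_I'] basisT by simp
  have cm_K: "cmono c w \<in> K" if wD: "w \<notin> Dw d" for c w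
  proof -
    obtain x where x: "x \<in> set w" "\<not> d dvd snd x" using wD by (auto simp: Dw_def)
    obtain u v where w: "w = u @ x # v" using split_list[OF x(1)] by blast
    have "pvar x \<in> N" using x(2) by (cases x) (auto simp: N_def)
    then have px: "pvar x \<in> K" using Tgen_sup[of "S' \<union> N"] by (auto simp: K_def)
    have "cmono c w = pmult (pmult (cmono c u) (pvar x)) (cmono 1 v)"
      by (simp add: pvar_cmono pmult_cmono w)
    then show ?thesis
      using TZ_pmult_r[OF K_TZ fa_cmono TZ_pmult_l[OF K_TZ fa_cmono px]] by simp
  qed
  have JK: "J \<subseteq> K"
  proof
    fix f assume f: "f \<in> J"
    then have ffa: "f \<in> fa" and "Unp d f \<in> T" by (auto simp: J_def)
    then have P: "Phi d (Unp d f) \<in> K" using T_I' by (auto simp: I'_def)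
    define F where "F = {w. f w \<noteq> 0} - Dw d"
    have finF: "finite F" using ffa by (auto simp: F_def fa_def)
    have G: "(\<lambda>u. if u \<in> G then f u else 0) \<in> K" if "finite G" "G \<subseteq> F" for G
      using that
    proof (induction G rule: finite_induct)
      case empty
      then show ?case using TZ_zero[OF K_TZ] by simp
    next
      case (insert w G)
      have "w \<notin> Dw d" using insert by (auto simp: F_def)
      then have c: "cmono (f w) w \<in> K" by (rule cm_K)
      have "(\<lambda>u. if u \<in> insert w G then f u else 0) = padd (cmono (f w) w) (\<lambda>u. if u \<in> G then f u else 0)"
        using insert(2) by (auto simp: padd_def cmono_def fun_eq_iff)
      then show ?case using TZ_padd[OF K_TZ c] insert by simp
    qed
    have "f = padd (Phi d (Unp d f)) (\<lambda>u. if u \<in> F then f u else 0)"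
      by (auto simp: padd_def Phi_Unp F_def fun_eq_iff)
    then show "f \<in> K" using TZ_padd[OF K_TZ P G[OF finF]] by simp
  qed
  have JE: "J = TZ_E deg"
  proof
    show "J \<subseteq> TZ_E deg"
    proof
      fix f assume f: "f \<in> J"
      then have ffa: "f \<in> fa" and fT: "Unp d f \<in> T" by (auto simp: J_def)
      have "geval \<phi> f = (\<lambda>C. 0)" if \<phi>: "\<forall>i g. \<phi> (i, g) \<in> Acomp deg g" for \<phi> :: "gvar \<Rightarrow> 'a grass"
      proof -
        have z: "\<phi> x = (\<lambda>C. 0)" if "\<not> d dvd snd x" for x
          using \<phi> that Acomp_zero by (cases x) auto
        have g': "\<forall>i g. (\<phi> \<circ> e1 d) (i, g) \<in> Acomp deg' g"
          using \<phi> Acomp_eq by (auto simp: e1_def)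
        have "geval \<phi> f = geval (\<phi> \<circ> e1 d) (Unp d f)" by (rule geval_reindex[OF d_nz ffa z])
        also have "\<dots> = (\<lambda>C. 0)" using fT g' by (simp add: T_def TZ_E_def)
        finally show ?thesis .
      qed
      then show "f \<in> TZ_E deg" using ffa by (simp add: TZ_E_def)
    qed
  next
    show "TZ_E deg \<subseteq> J"
    proof
      fix f :: "'a fpoly" assume f: "f \<in> TZ_E deg"
      then have ffa: "f \<in> fa" by (simp add: TZ_E_def)
      have "geval \<psi> (Unp d f) = (\<lambda>C. 0)" if \<psi>: "\<forall>i g. \<psi> (i, g) \<in> Acomp deg' g" for \<psi> :: "gvar \<Rightarrow> 'a grass"
      proof -
        define \<phi> where "\<phi> = (\<lambda>x. if d dvd snd x then \<psi> (dv d x) else (\<lambda>C. 0))"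
        have z: "\<phi> x = (\<lambda>C. 0)" if "\<not> d dvd snd x" for x
          using that by (simp add: \<phi>_def)
        have g: "\<phi> (i, g) \<in> Acomp deg g" for i g
        proof (cases "d dvd g")
          case True
          then obtain k where k: "g = d * k" by blast
          have "\<psi> (i, k) \<in> Acomp deg (d * k)" unfolding Acomp_eq using \<psi> by blast
          then show ?thesis using k d_nz by (simp add: \<phi>_def dv_def)
        next
          case False
          then show ?thesis by (simp add: \<phi>_def zero_Acomp)
        qed
        have pe: "\<phi> \<circ> e1 d = \<psi>" using d_nz by (auto simp: \<phi>_def e1_def dv_def fun_eq_iff)
        have "geval \<psi> (Unp d f) = geval \<phi> f" using geval_reindex[OF d_nz ffa z] pe by simp
        also have "\<dots> = (\<lambda>C. 0)" using f g by (simp add: TZ_E_def)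
        finally show ?thesis .
      qed
      then show "f \<in> J" using ffa fa_Unp[OF d_nz ffa] by (simp add: J_def T_def TZ_E_def)
    qed
  qed
  have "K = TZ_E deg" using KJ JK JE by auto
  then show ?thesis by (simp add: K_def S'_def N_def deg_def)
qed

end
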